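(* Let $(G,u,v,\alpha,\beta)$ be a Guvab with $\lim_{k\to\infty}W_k=1$ and $\beta<1$. Then $\rho(G,u,v,\alpha,\beta)\ge\frac{d(u,v)}{2}-1$.
   Context: A Guvab is a tuple $(G,u,v,\alpha,\beta)$ where $G$ is a finite, connected, simple graph, $u,v\in V(G)$, and $\alpha,\beta\in[0,1]$ with $\alpha\le\beta$. A random walk on $G$ with starting vertex $w$ and laziness $\gamma$ is the Markov chain $R_0=w$ and, for $i\ge1$, $R_i=R_{i-1}$ with probability $\gamma$ and $R_i=t$ with probability $\frac{1-\gamma}{\deg(R_{i-1})}$ for each neighbor $t$ of $R_{i-1}$. $\mu_k$ is the distribution after $k$ steps of the walk from $u$ with laziness $\alpha$, $\nu_k$ that of the walk from $v$ with laziness $\beta$, and $W_k=W(\mu_k,\nu_k)$ is the Wasserstein ($L^1$ optimal transport) distance with respect to the graph distance $d$: the minimum over transportation plans (nonnegative $T$ on $V(G)\times V(G)$ with marginals $\mu_k,\nu_k$) of $\sum d(w_1,w_2)T(w_1,w_2)$. For a Guvab with $W_k\to1$, $\rho=\inf\{N\in\mathbb{Z}: W_k=1\text{ for all }k\ge N\}$. *)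

theory Defs
  imports "HOL-Analysis.Analysis" "HOL-Library.Extended_Real"
begin

definition fcs_graph :: "'a set \<Rightarrow> ('a \<Rightarrow> 'a \<Rightarrow> bool) \<Rightarrow> bool" where
  "fcs_graph V E \<longleftrightarrow> finite V \<and> V \<noteq> {}
     \<and> (\<forall>x y. E x y \<longrightarrow> x \<in> V \<and> y \<in> V)
     \<and> (\<forall>x. \<not> E x x) \<and> (\<forall>x y. E x y \<longrightarrow> E y x)
     \<and> (\<forall>x\<in>V. \<forall>y\<in>V. E\<^sup>*\<^sup>* x y)"

definition gdist :: "('a \<Rightarrow> 'a \<Rightarrow> bool) \<Rightarrow> 'a \<Rightarrow> 'a \<Rightarrow> nat" where
  "gdist E x y = (LEAST n. (E ^^ n) x y)"

definition gdeg :: "'a set \<Rightarrow> ('a \<Rightarrow> 'a \<Rightarrow> bool) \<Rightarrow> 'a \<Rightarrow> nat" where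
  "gdeg V E t = card {s \<in> V. E t s}"

definition trans_prob :: "'a set \<Rightarrow> ('a \<Rightarrow> 'a \<Rightarrow> bool) \<Rightarrow> real \<Rightarrow> 'a \<Rightarrow> 'a \<Rightarrow> real" where
  "trans_prob V E \<gamma> t w = (if t = w then \<gamma> else 0)
      + (if E t w then (1 - \<gamma>) / real (gdeg V E t) else 0)"

fun walk_dist :: "'a set \<Rightarrow> ('a \<Rightarrow> 'a \<Rightarrow> bool) \<Rightarrow> real \<Rightarrow> 'a \<Rightarrow> nat \<Rightarrow> 'a \<Rightarrow> real" where
  "walk_dist V E \<gamma> w0 0 = (\<lambda>w. if w = w0 then 1 else 0)"
| "walk_dist V E \<gamma> w0 (Suc k) =
     (\<lambda>w. \<Sum>t\<in>V. walk_dist V E \<gamma> w0 k t * trans_prob V E \<gamma> t w)"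

definition transport_plan :: "'a set \<Rightarrow> ('a \<Rightarrow> real) \<Rightarrow> ('a \<Rightarrow> real) \<Rightarrow> ('a \<Rightarrow> 'a \<Rightarrow> real) \<Rightarrow> bool" where
  "transport_plan V \<mu> \<nu> T \<longleftrightarrow> (\<forall>x\<in>V. \<forall>y\<in>V. T x y \<ge> 0)
     \<and> (\<forall>x\<in>V. (\<Sum>y\<in>V. T x y) = \<mu> x) \<and> (\<forall>y\<in>V. (\<Sum>x\<in>V. T x y) = \<nu> y)"

definition wasserstein :: "'a set \<Rightarrow> ('a \<Rightarrow> 'a \<Rightarrow> bool) \<Rightarrow> ('a \<Rightarrow> real) \<Rightarrow> ('a \<Rightarrow> real) \<Rightarrow> real" where
  "wasserstein V E \<mu> \<nu> = Inf {(\<Sum>x\<in>V. \<Sum>y\<in>V. real (gdist E x y) * T x y) | T. transport_plan V \<mu> \<nu> T}"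

definition W_seq :: "'a set \<Rightarrow> ('a \<Rightarrow> 'a \<Rightarrow> bool) \<Rightarrow> 'a \<Rightarrow> 'a \<Rightarrow> real \<Rightarrow> real \<Rightarrow> nat \<Rightarrow> real" where
  "W_seq V E u v \<alpha> \<beta> k = wasserstein V E (walk_dist V E \<alpha> u k) (walk_dist V E \<beta> v k)"

text \<open>\<rho>: infimum of the N (ranging over step indices, i.e. naturals) with W_k = 1 for all k \<ge> N;
  taken in the extended reals, so the infimum of the empty set is \<infinity>.\<close>
definition rho :: "'a set \<Rightarrow> ('a \<Rightarrow> 'a \<Rightarrow> bool) \<Rightarrow> 'a \<Rightarrow> 'a \<Rightarrow> real \<Rightarrow> real \<Rightarrow> ereal" where
  "rho V E u v \<alpha> \<beta> = Inf {ereal (real N) | N::nat. \<forall>k\<ge>N. W_seq V E u v \<alpha> \<beta> k = 1}"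

definition guvab :: "'a set \<Rightarrow> ('a \<Rightarrow> 'a \<Rightarrow> bool) \<Rightarrow> 'a \<Rightarrow> 'a \<Rightarrow> real \<Rightarrow> real \<Rightarrow> bool" where
  "guvab V E u v \<alpha> \<beta> \<longleftrightarrow> fcs_graph V E \<and> u \<in> V \<and> v \<in> V
     \<and> 0 \<le> \<alpha> \<and> \<alpha> \<le> \<beta> \<and> \<beta> \<le> 1"

end

theory Submission
  imports Defs
begin

lemma relpowp_sym:
  assumes "\<And>x y. E x y \<Longrightarrow> E y x" "(E ^^ n) x y"
  shows "(E ^^ n) y x"
  using assms(2)
proof (induction n arbitrary: y)
  case 0 then show ?case by simp
next
  case (Suc n)
  from Suc.prems obtain z where "(E ^^ n) x z" "E z y" by (rule relpowp_Suc_E)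
  then show ?case using Suc.IH assms(1) by (meson relpowp_Suc_I2)
qed

lemma gdist_le: "(E ^^ n) x y \<Longrightarrow> gdist E x y \<le> n"
  unfolding gdist_def by (rule Least_le)

lemma gdist_attain: "E\<^sup>*\<^sup>* x y \<Longrightarrow> (E ^^ gdist E x y) x y"
  unfolding gdist_def rtranclp_power by (rule LeastI_ex)

lemma relpow3: "(E ^^ a) u x \<Longrightarrow> (E ^^ b) x y \<Longrightarrow> (E ^^ c) y v \<Longrightarrow> (E ^^ (a+b+c)) u v"
  by (auto simp: relpowp_add)

lemma sum_trans:
  assumes "finite V" "t \<in> V" "gdeg V E t > 0"
  shows "(\<Sum>w\<in>V. trans_prob V E \<gamma> t w) = 1"
proof -
  have "(\<Sum>w\<in>V. trans_prob V E \<gamma> t w) = (\<Sum>w\<in>V. (if t = w then \<gamma> else 0))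
     + (\<Sum>w\<in>V. (if E t w then (1 - \<gamma>) / real (gdeg V E t) else 0))"
    unfolding trans_prob_def by (simp add: sum.distrib)
  also have "(\<Sum>w\<in>V. (if t = w then \<gamma> else 0)) = \<gamma>" using assms by simp
  also have "(\<Sum>w\<in>V. (if E t w then (1 - \<gamma>) / real (gdeg V E t) else 0))
     = real (gdeg V E t) * ((1 - \<gamma>) / real (gdeg V E t))"
    using assms(1) by (simp add: sum.If_cases gdeg_def Int_def conj_commute)
  also have "\<dots> = 1 - \<gamma>" using assms(3) by simp
  finally show ?thesis by simp
qed

lemma walk_sum:
  assumes "finite V" "w0 \<in> V" "\<forall>t\<in>V. gdeg V E t > 0"
  shows "(\<Sum>w\<in>V. walk_dist V E \<gamma> w0 k w) = 1"
proof (induction k)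
  case 0 then show ?case using assms by simp
next
  case (Suc k)
  have "(\<Sum>w\<in>V. walk_dist V E \<gamma> w0 (Suc k) w)
     = (\<Sum>t\<in>V. walk_dist V E \<gamma> w0 k t * (\<Sum>w\<in>V. trans_prob V E \<gamma> t w))"
    by (simp only: walk_dist.simps sum_distrib_left) (rule sum.swap)
  also have "\<dots> = (\<Sum>t\<in>V. walk_dist V E \<gamma> w0 k t)"
  proof (rule sum.cong[OF refl])
    fix t assume "t \<in> V"
    then show "walk_dist V E \<gamma> w0 k t * (\<Sum>w\<in>V. trans_prob V E \<gamma> t w) = walk_dist V E \<gamma> w0 k t"
      using sum_trans[OF assms(1) \<open>t \<in> V\<close>, of E \<gamma>] assms(3) by simp
  qed
  finally show ?case using Suc by simp
qed

lemma walk_nonneg: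
  assumes "0 \<le> \<gamma>" "\<gamma> \<le> 1"
  shows "walk_dist V E \<gamma> w0 k w \<ge> 0"
proof (induction k arbitrary: w)
  case 0 then show ?case by simp
next
  case (Suc k)
  have "\<And>t. trans_prob V E \<gamma> t w \<ge> 0" using assms unfolding trans_prob_def by auto
  then show ?case using Suc by (simp add: sum_nonneg)
qed

lemma walk_supp:
  "walk_dist V E \<gamma> w0 k x \<noteq> 0 \<Longrightarrow> \<exists>n\<le>k. (E ^^ n) w0 x"
proof (induction k arbitrary: x)
  case 0 then show ?case by (auto split: if_splits)
next
  case (Suc k)
  have "(\<Sum>t\<in>V. walk_dist V E \<gamma> w0 k t * trans_prob V E \<gamma> t x) \<noteq> 0"
    using Suc.prems by simp
  then obtain t where t: "t \<in> V" "walk_dist V E \<gamma> w0 k t * trans_prob V E \<gamma> t x \<noteq> 0"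
    by (meson sum.neutral)
  then have "t = x \<or> E t x" unfolding trans_prob_def by (auto split: if_splits)
  moreover obtain n where "n \<le> k" "(E ^^ n) w0 t" using Suc.IH t by fastforce
  ultimately show ?case
    by (metis le_SucI not_less_eq_eq relpowp_Suc_I)
qed

lemma deg_pos:
  assumes g: "fcs_graph V E" and uv: "u \<in> V" "v \<in> V" "u \<noteq> v" and t: "t \<in> V"
  shows "gdeg V E t > 0"
proof -
  have fin: "finite V" using g unfolding fcs_graph_def by auto
  obtain y where y: "y \<in> V" "y \<noteq> t" using uv by auto
  have "E\<^sup>*\<^sup>* t y" using g y t unfolding fcs_graph_def by auto
  then obtain z where "E t z" using y(2) by (metis converse_rtranclpE)
  then have "z \<in> {s \<in> V. E t s}" using g unfolding fcs_graph_def by auto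
  then show ?thesis unfolding gdeg_def using fin
    by (metis (no_types, lifting) card_gt_0_iff empty_iff finite_subset mem_Collect_eq subsetI)
qed

lemma cost_bound:
  assumes g: "fcs_graph V E" and uv: "u \<in> V" "v \<in> V"
    and deg: "\<forall>t\<in>V. gdeg V E t > 0"
    and T: "transport_plan V (walk_dist V E \<alpha> u k) (walk_dist V E \<beta> v k) T"
  shows "(\<Sum>x\<in>V. \<Sum>y\<in>V. real (gdist E x y) * T x y) \<ge> real (gdist E u v) - 2 * real k"
proof -
  have fin: "finite V" using g unfolding fcs_graph_def by auto
  have sym: "\<And>x y. E x y \<Longrightarrow> E y x" using g unfolding fcs_graph_def by auto
  let ?c = "real (gdist E u v) - 2 * real k"
  have rows: "\<forall>x\<in>V. (\<Sum>y\<in>V. T x y) = walk_dist V E \<alpha> u k x"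
    and cols: "\<forall>y\<in>V. (\<Sum>x\<in>V. T x y) = walk_dist V E \<beta> v k y"
    and Tnn0: "\<forall>x\<in>V. \<forall>y\<in>V. T x y \<ge> 0"
    using T unfolding transport_plan_def by blast+
  have pt: "real (gdist E x y) * T x y \<ge> ?c * T x y" if xy: "x \<in> V" "y \<in> V" for x y
  proof (cases "T x y = 0")
    case True then show ?thesis by simp
  next
    case False
    have Tnn: "\<forall>y\<in>V. T x y \<ge> 0" "\<forall>x\<in>V. T x y \<ge> 0" using Tnn0 xy by auto
    have "walk_dist V E \<alpha> u k x \<noteq> 0"
    proof
      assume "walk_dist V E \<alpha> u k x = 0"
      then have "(\<Sum>y\<in>V. T x y) = 0" using rows xy(1) by simp
      then have "\<forall>y\<in>V. T x y = 0" using sum_nonneg_eq_0_iff[OF fin, of "\<lambda>y. T x y"] Tnn(1) by simp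
      then show False using False xy by auto
    qed
    from walk_supp[OF this] obtain a where a: "a \<le> k" "(E ^^ a) u x" by blast
    have "walk_dist V E \<beta> v k y \<noteq> 0"
    proof
      assume "walk_dist V E \<beta> v k y = 0"
      then have "(\<Sum>x\<in>V. T x y) = 0" using cols xy(2) by simp
      then have "\<forall>x\<in>V. T x y = 0" using sum_nonneg_eq_0_iff[OF fin, of "\<lambda>x. T x y"] Tnn(2) by simp
      then show False using False xy by auto
    qed
    from walk_supp[OF this] obtain c where c: "c \<le> k" "(E ^^ c) v y" by blast
    have c': "(E ^^ c) y v" using relpowp_sym[OF sym c(2)] by blast
    have "E\<^sup>*\<^sup>* x y" using g xy unfolding fcs_graph_def by auto
    then have "(E ^^ gdist E x y) x y" by (rule gdist_attain)
    then have "(E ^^ (a + gdist E x y + c)) u v" by (rule relpow3[OF a(2) _ c'])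
    then have "gdist E u v \<le> a + gdist E x y + c" by (rule gdist_le)
    then have "real (gdist E x y) \<ge> ?c" using a(1) c(1) by linarith
    moreover have "T x y \<ge> 0" using Tnn xy by auto
    ultimately show ?thesis by (rule mult_right_mono)
  qed
  have "(\<Sum>x\<in>V. \<Sum>y\<in>V. real (gdist E x y) * T x y) \<ge> (\<Sum>x\<in>V. \<Sum>y\<in>V. ?c * T x y)"
    by (intro sum_mono) (rule pt; assumption)
  moreover have "(\<Sum>x\<in>V. \<Sum>y\<in>V. ?c * T x y) = ?c * (\<Sum>x\<in>V. walk_dist V E \<alpha> u k x)"
  proof -
    have "(\<Sum>x\<in>V. \<Sum>y\<in>V. ?c * T x y) = (\<Sum>x\<in>V. ?c * walk_dist V E \<alpha> u k x)"
    proof (rule sum.cong[OF refl])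
      fix x assume "x \<in> V"
      have "(\<Sum>y\<in>V. ?c * T x y) = ?c * (\<Sum>y\<in>V. T x y)" by (rule sum_distrib_left[symmetric])
      then show "(\<Sum>y\<in>V. ?c * T x y) = ?c * walk_dist V E \<alpha> u k x" using rows \<open>x \<in> V\<close> by simp
    qed
    also have "\<dots> = ?c * (\<Sum>x\<in>V. walk_dist V E \<alpha> u k x)" by (rule sum_distrib_left[symmetric])
    finally show ?thesis .
  qed
  moreover have "(\<Sum>x\<in>V. walk_dist V E \<alpha> u k x) = 1" by (rule walk_sum[OF fin uv(1) deg])
  ultimately show ?thesis by simp
qed

lemma W_bound:
  assumes g: "guvab V E u v \<alpha> \<beta>" and uv: "u \<noteq> v"
  shows "W_seq V E u v \<alpha> \<beta> k \<ge> real (gdist E u v) - 2 * real k"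
proof -
  have gr: "fcs_graph V E" "u \<in> V" "v \<in> V" "0 \<le> \<alpha>" "\<alpha> \<le> \<beta>" "\<beta> \<le> 1"
    using g unfolding guvab_def by auto
  have fin: "finite V" using gr unfolding fcs_graph_def by auto
  have deg: "\<forall>t\<in>V. gdeg V E t > 0" using deg_pos[OF gr(1,2,3) uv] by blast
  let ?m = "walk_dist V E \<alpha> u k" and ?n = "walk_dist V E \<beta> v k"
  have "transport_plan V ?m ?n (\<lambda>x y. ?m x * ?n y)"
    unfolding transport_plan_def
  proof (intro conjI ballI)
    fix x y assume "x \<in> V" "y \<in> V"
    have "0 \<le> ?m x" "0 \<le> ?n y" using walk_nonneg[of \<alpha>] walk_nonneg[of \<beta>] gr by auto
    then show "0 \<le> ?m x * ?n y" by simp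
  next
    fix x show "(\<Sum>y\<in>V. ?m x * ?n y) = ?m x"
      unfolding sum_distrib_left[symmetric] walk_sum[OF fin gr(3) deg] by simp
  next
    fix y show "(\<Sum>x\<in>V. ?m x * ?n y) = ?n y"
      unfolding sum_distrib_right[symmetric] walk_sum[OF fin gr(2) deg] by simp
  qed
  then have ne: "{(\<Sum>x\<in>V. \<Sum>y\<in>V. real (gdist E x y) * T x y) | T. transport_plan V ?m ?n T} \<noteq> {}"
    by (intro ex_in_conv[THEN iffD1] exI[of _ "(\<Sum>x\<in>V. \<Sum>y\<in>V. real (gdist E x y) * (?m x * ?n y))"]) (rule CollectI, rule exI, rule conjI[OF refl])
  show ?thesis unfolding W_seq_def wasserstein_def
  proof (rule cInf_greatest[OF ne])
    fix z assume "z \<in> {(\<Sum>x\<in>V. \<Sum>y\<in>V. real (gdist E x y) * T x y) | T. transport_plan V ?m ?n T}"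
    then obtain T where T: "z = (\<Sum>x\<in>V. \<Sum>y\<in>V. real (gdist E x y) * T x y)" "transport_plan V ?m ?n T"
      by (rule CollectE) (elim exE conjE)
    show "real (gdist E u v) - 2 * real k \<le> z"
      unfolding T(1) by (rule cost_bound[OF gr(1,2,3) deg T(2)])
  qed
qed

theorem lemma4p14:
  fixes V :: "'a set" and E :: "'a \<Rightarrow> 'a \<Rightarrow> bool" and u v :: 'a and \<alpha> \<beta> :: real
  assumes "guvab V E u v \<alpha> \<beta>"
    and "W_seq V E u v \<alpha> \<beta> \<longlonglongrightarrow> 1"
    and "\<beta> < 1"
  shows "rho V E u v \<alpha> \<beta> \<ge> ereal (real (gdist E u v) / 2 - 1)"
  unfolding rho_def
proof (rule Inf_greatest)
  fix x assume "x \<in> {ereal (real N) |N. \<forall>k\<ge>N. W_seq V E u v \<alpha> \<beta> k = 1}"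
  then obtain N where N: "x = ereal (real N)" "\<forall>k\<ge>N. W_seq V E u v \<alpha> \<beta> k = 1" by blast
  have "real (gdist E u v) / 2 - 1 \<le> real N"
  proof (cases "u = v")
    case True
    have "gdist E u v = 0" using True gdist_le[where n=0 and x=u and y=u and E=E] by simp
    then show ?thesis by simp
  next
    case False
    have "W_seq V E u v \<alpha> \<beta> N \<ge> real (gdist E u v) - 2 * real N"
      using W_bound[OF assms(1) False] .
    then show ?thesis using N(2) by simp
  qed
  then show "ereal (real (gdist E u v) / 2 - 1) \<le> x" using N(1) by simp
qed

end
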